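(* Let $u\in\mathrm{BMOA}(\mathbb T)$ and $s>0$ with $E_H(s)+E_K(s)\neq\{0\}$. Then exactly one of the following holds: (1) $u\not\perp E_H(s)$ and $E_K(s)=E_H(s)\cap u^\perp$; (2) $u\not\perp E_K(s)$ and $E_H(s)=E_K(s)\cap u^\perp$.
   Context: $\mathcal H^2=\mathcal H^2(\mathbb T)$, $P$ the Szegő projection, $S$ the shift $Sf(z)=zf(z)$ with adjoint $S^*$. For $u\in\mathrm{BMOA}(\mathbb T)$: $H_uf=P(u\overline f)$ (anti-linear Hankel operator) and $K_u:=H_uS=S^*H_u=H_{S^*u}$. $E_H(s)=\operatorname{Ker}(H_u^2-s^2I)$, $E_K(s)=\operatorname{Ker}(K_u^2-s^2I)$. Note $K_u^2=H_u^2-(\cdot,u)u$. *)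

theory Defs
  imports "HOL-Analysis.Analysis"
begin

text \<open>The Hardy space H^2(T) is modelled through Fourier coefficients:
  f(z) = sum_{n>=0} f n z^n, with (f n) square summable.\<close>

definition H2 :: "(nat \<Rightarrow> complex) set" where
  "H2 = {f. summable (\<lambda>n. (cmod (f n))\<^sup>2)}"

definition h2_inner :: "(nat \<Rightarrow> complex) \<Rightarrow> (nat \<Rightarrow> complex) \<Rightarrow> complex" where
  "h2_inner f g = (\<Sum>n. f n * cnj (g n))"

text \<open>Anti-linear Hankel operator H_u f = P(u conj f); in coefficients
  (H_u f)_n = sum_k u_(n+k) conj(f_k).\<close>
definition hankel :: "(nat \<Rightarrow> complex) \<Rightarrow> (nat \<Rightarrow> complex) \<Rightarrow> (nat \<Rightarrow> complex)" where
  "hankel u f = (\<lambda>n. \<Sum>k. u (n + k) * cnj (f k))"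

definition shift_adj :: "(nat \<Rightarrow> complex) \<Rightarrow> (nat \<Rightarrow> complex)" where
  "shift_adj u = (\<lambda>n. u (Suc n))"

text \<open>K_u = H_u S = S^* H_u = H_{S^* u}.\<close>
definition shifted_hankel :: "(nat \<Rightarrow> complex) \<Rightarrow> (nat \<Rightarrow> complex) \<Rightarrow> (nat \<Rightarrow> complex)" where
  "shifted_hankel u = hankel (shift_adj u)"

text \<open>BMOA(T): by the Nehari--Fefferman theorem, the symbols u in H^2 whose
  Hankel operator H_u is bounded on H^2.\<close>
definition BMOA :: "(nat \<Rightarrow> complex) set" where
  "BMOA = {u. u \<in> H2 \<and> (\<exists>C. \<forall>f\<in>H2. hankel u f \<in> H2 \<and>
              (\<Sum>n. (cmod (hankel u f n))\<^sup>2) \<le> C * (\<Sum>n. (cmod (f n))\<^sup>2))}"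

definition E_H :: "(nat \<Rightarrow> complex) \<Rightarrow> real \<Rightarrow> (nat \<Rightarrow> complex) set" where
  "E_H u s = {f \<in> H2. hankel u (hankel u f) = (\<lambda>n. complex_of_real (s\<^sup>2) * f n)}"

definition E_K :: "(nat \<Rightarrow> complex) \<Rightarrow> real \<Rightarrow> (nat \<Rightarrow> complex) set" where
  "E_K u s = {f \<in> H2. shifted_hankel u (shifted_hankel u f) = (\<lambda>n. complex_of_real (s\<^sup>2) * f n)}"

definition orth_to :: "(nat \<Rightarrow> complex) \<Rightarrow> (nat \<Rightarrow> complex) set \<Rightarrow> bool" where
  "orth_to u E \<longleftrightarrow> (\<forall>f\<in>E. h2_inner f u = 0)"

definition orth_compl :: "(nat \<Rightarrow> complex) \<Rightarrow> (nat \<Rightarrow> complex) set" where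
  "orth_compl u = {f \<in> H2. h2_inner f u = 0}"

end

theory Submission imports Defs begin

definition nrm :: "(nat \<Rightarrow> complex) \<Rightarrow> real" where
  "nrm f = (\<Sum>n. (cmod (f n))\<^sup>2)"

lemma H2_D: "f \<in> H2 \<Longrightarrow> summable (\<lambda>n. (cmod (f n))\<^sup>2)"
  by (simp add: H2_def)

lemma prod_le_sq: "(a::real) * b \<le> a\<^sup>2 + b\<^sup>2"
  using sum_squares_bound[of a b] zero_le_power2[of a] zero_le_power2[of b] by linarith

lemma H2_prod_norm:
  assumes "f \<in> H2" "g \<in> H2"
  shows "summable (\<lambda>n. cmod (f n) * cmod (g n))"
proof (rule summable_comparison_test')
  show "summable (\<lambda>n. (cmod (f n))\<^sup>2 + (cmod (g n))\<^sup>2)"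
    using assms by (intro summable_add H2_D)
  show "norm (cmod (f n) * cmod (g n)) \<le> (cmod (f n))\<^sup>2 + (cmod (g n))\<^sup>2" for n
    using prod_le_sq[of "cmod (f n)" "cmod (g n)"] by simp
qed

lemma H2_prod:
  assumes "f \<in> H2" "g \<in> H2"
  shows "summable (\<lambda>n. f n * cnj (g n))"
  by (rule summable_norm_cancel) (use H2_prod_norm[OF assms] in \<open>simp add: norm_mult\<close>)

lemma H2_prod':
  assumes "f \<in> H2" "g \<in> H2"
  shows "summable (\<lambda>n. f n * g n)"
  by (rule summable_norm_cancel) (use H2_prod_norm[OF assms] in \<open>simp add: norm_mult\<close>)

lemma H2_shift: "f \<in> H2 \<Longrightarrow> (\<lambda>n. f (n + k)) \<in> H2"
  unfolding H2_def using summable_iff_shift[of "\<lambda>n. (cmod (f n))\<^sup>2" k] by simp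

lemma H2_shift': "f \<in> H2 \<Longrightarrow> (\<lambda>n. f (k + n)) \<in> H2"
  using H2_shift[of f k] by (simp add: add.commute)

lemma H2_diff:
  assumes "f \<in> H2" "g \<in> H2"
  shows "(\<lambda>n. f n - g n) \<in> H2"
  unfolding H2_def mem_Collect_eq
proof (rule summable_comparison_test')
  show "summable (\<lambda>n. 2 * (cmod (f n))\<^sup>2 + 2 * (cmod (g n))\<^sup>2)"
    using assms by (intro summable_add summable_mult H2_D)
  show "norm ((cmod (f n - g n))\<^sup>2) \<le> 2 * (cmod (f n))\<^sup>2 + 2 * (cmod (g n))\<^sup>2" for n
  proof -
    have "cmod (f n - g n) \<le> cmod (f n) + cmod (g n)" by (rule norm_triangle_ineq4)
    hence "(cmod (f n - g n))\<^sup>2 \<le> (cmod (f n) + cmod (g n))\<^sup>2"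
      by (simp add: power_mono)
    also have "\<dots> \<le> 2 * (cmod (f n))\<^sup>2 + 2 * (cmod (g n))\<^sup>2"
      using sum_squares_bound[of "cmod (f n)" "cmod (g n)"] by (simp add: power2_sum)
    finally show ?thesis by simp
  qed
qed

lemma H2_scale: "f \<in> H2 \<Longrightarrow> (\<lambda>n. c * f n) \<in> H2"
  unfolding H2_def by (simp add: norm_mult power_mult_distrib summable_mult)

lemma H2_zero: "(\<lambda>n. 0) \<in> H2"
  unfolding H2_def by simp

lemma hankel_summable:
  assumes "u \<in> H2" "f \<in> H2"
  shows "summable (\<lambda>k. u (n + k) * cnj (f k))"
  using H2_prod[OF H2_shift'[OF assms(1)] assms(2)] .

lemma hankel_diff:
  assumes "u \<in> H2" "f \<in> H2" "g \<in> H2"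
  shows "hankel u (\<lambda>n. f n - g n) = (\<lambda>n. hankel u f n - hankel u g n)"
  unfolding hankel_def
  by (rule ext, subst suminf_diff[OF hankel_summable[OF assms(1,2)] hankel_summable[OF assms(1,3)]])
     (simp add: algebra_simps)

lemma hankel_scale:
  assumes "u \<in> H2" "f \<in> H2"
  shows "hankel u (\<lambda>n. c * f n) = (\<lambda>n. cnj c * hankel u f n)"
  unfolding hankel_def
  by (rule ext, subst suminf_mult[OF hankel_summable[OF assms], symmetric])
     (simp add: algebra_simps)

lemma suminf_cnj: "summable f \<Longrightarrow> cnj (suminf f) = (\<Sum>n. cnj (f n))"
  by (metis sums_cnj summable_sums sums_unique)

lemma inner_cnj:
  assumes "f \<in> H2" "g \<in> H2"
  shows "cnj (h2_inner f g) = h2_inner g f"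
  unfolding h2_inner_def by (subst suminf_cnj[OF H2_prod[OF assms]]) (simp add: mult.commute)

lemma inner_diff_left:
  assumes "f \<in> H2" "g \<in> H2" "h \<in> H2"
  shows "h2_inner (\<lambda>n. f n - g n) h = h2_inner f h - h2_inner g h"
  unfolding h2_inner_def
  by (subst suminf_diff[OF H2_prod[OF assms(1,3)] H2_prod[OF assms(2,3)]]) (simp add: algebra_simps)

lemma inner_scale_left:
  assumes "f \<in> H2" "h \<in> H2"
  shows "h2_inner (\<lambda>n. c * f n) h = c * h2_inner f h"
  unfolding h2_inner_def
  by (subst suminf_mult[OF H2_prod[OF assms], symmetric]) (simp add: algebra_simps)

lemma CS_real:
  fixes a b :: "nat \<Rightarrow> real"
  assumes "summable (\<lambda>n. (a n)\<^sup>2)" "summable (\<lambda>n. (b n)\<^sup>2)" "summable (\<lambda>n. a n * b n)"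
  shows "(\<Sum>n. a n * b n)\<^sup>2 \<le> (\<Sum>n. (a n)\<^sup>2) * (\<Sum>n. (b n)\<^sup>2)"
proof (rule LIMSEQ_le)
  show "(\<lambda>N. (\<Sum>n<N. a n * b n)\<^sup>2) \<longlonglongrightarrow> (\<Sum>n. a n * b n)\<^sup>2"
    by (intro tendsto_power summable_LIMSEQ assms)
  show "(\<lambda>N. (\<Sum>n<N. (a n)\<^sup>2) * (\<Sum>n<N. (b n)\<^sup>2)) \<longlonglongrightarrow> (\<Sum>n. (a n)\<^sup>2) * (\<Sum>n. (b n)\<^sup>2)"
    by (intro tendsto_mult summable_LIMSEQ assms)
  show "\<exists>N. \<forall>n\<ge>N. (\<Sum>n<n. a n * b n)\<^sup>2 \<le> (\<Sum>n<n. (a n)\<^sup>2) * (\<Sum>n<n. (b n)\<^sup>2)"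
    by (auto intro: Cauchy_Schwarz_ineq_sum)
qed

lemma CS_H2:
  assumes "f \<in> H2" "g \<in> H2"
  shows "(cmod (h2_inner f g))\<^sup>2 \<le> nrm f * nrm g"
proof -
  have "cmod (h2_inner f g) \<le> (\<Sum>n. cmod (f n) * cmod (g n))"
    unfolding h2_inner_def using summable_norm[of "\<lambda>n. f n * cnj (g n)"] H2_prod_norm[OF assms]
    by (simp add: norm_mult)
  hence "(cmod (h2_inner f g))\<^sup>2 \<le> (\<Sum>n. cmod (f n) * cmod (g n))\<^sup>2"
    by (simp add: power_mono)
  also have "\<dots> \<le> nrm f * nrm g"
    unfolding nrm_def by (rule CS_real[OF H2_D[OF assms(1)] H2_D[OF assms(2)] H2_prod_norm[OF assms]])
  finally show ?thesis .
qed


lemma BMOA_H2: "u \<in> BMOA \<Longrightarrow> u \<in> H2"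
  by (simp add: BMOA_def)

lemma BMOA_hankel_H2: "u \<in> BMOA \<Longrightarrow> f \<in> H2 \<Longrightarrow> hankel u f \<in> H2"
  unfolding BMOA_def by blast

lemma BMOA_bound: "u \<in> BMOA \<Longrightarrow> \<exists>C. \<forall>f\<in>H2. nrm (hankel u f) \<le> C * nrm f"
  unfolding BMOA_def nrm_def by blast

lemma shifted_hankel_eq: "shifted_hankel u f = (\<lambda>n. hankel u f (Suc n))"
  unfolding shifted_hankel_def hankel_def shift_adj_def by simp

lemma nrm_nonneg: "f \<in> H2 \<Longrightarrow> 0 \<le> nrm f"
  unfolding nrm_def by (rule suminf_nonneg) (auto dest: H2_D)

lemma nrm_Suc: assumes "f \<in> H2" shows "nrm (\<lambda>n. f (Suc n)) \<le> nrm f"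
  using suminf_split_head[OF H2_D[OF assms]] unfolding nrm_def by simp

lemma H2_Suc: "f \<in> H2 \<Longrightarrow> (\<lambda>n. f (Suc n)) \<in> H2"
  using H2_shift[of f 1] by simp

lemma shift_BMOA:
  assumes "u \<in> BMOA" shows "shift_adj u \<in> BMOA"
proof -
  obtain C where C: "\<forall>f\<in>H2. nrm (hankel u f) \<le> C * nrm f" using BMOA_bound[OF assms] by blast
  have "shift_adj u \<in> H2" unfolding shift_adj_def using H2_Suc[OF BMOA_H2[OF assms]] .
  moreover have "hankel (shift_adj u) f \<in> H2 \<and>
      (\<Sum>n. (cmod (hankel (shift_adj u) f n))\<^sup>2) \<le> C * (\<Sum>n. (cmod (f n))\<^sup>2)" if f: "f \<in> H2" for f
  proof -
    have e: "hankel (shift_adj u) f = (\<lambda>n. hankel u f (Suc n))"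
      using shifted_hankel_eq[of u f] unfolding shifted_hankel_def .
    have h: "hankel u f \<in> H2" using BMOA_hankel_H2[OF assms f] .
    show ?thesis
      using H2_Suc[OF h] nrm_Suc[OF h] C f unfolding e nrm_def by force
  qed
  ultimately show ?thesis unfolding BMOA_def by blast
qed

lemma hankel_sym:
  assumes u: "u \<in> BMOA" and a: "a \<in> H2" and b: "b \<in> H2"
  shows "h2_inner (hankel u a) b = h2_inner (hankel u b) a"
proof -
  have uH: "u \<in> H2" using BMOA_H2[OF u] .
  obtain C where C: "\<forall>f\<in>H2. nrm (hankel u f) \<le> C * nrm f" using BMOA_bound[OF u] by blast
  define bt where "bt N = (\<lambda>n. if n < N then b n else 0)" for N
  have btH: "bt N \<in> H2" for N
    unfolding H2_def mem_Collect_eq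
    by (rule summable_comparison_test'[OF H2_D[OF b], of 0]) (auto simp: bt_def)
  have ha: "hankel u a \<in> H2" using BMOA_hankel_H2[OF u a] .
  have A1: "h2_inner (hankel u a) (bt N) = (\<Sum>n<N. hankel u a n * cnj (b n))" for N
    unfolding h2_inner_def by (subst suminf_finite[of "{..<N}"]) (auto simp: bt_def)
  have fin: "h2_inner (hankel u a) (bt N) = h2_inner (hankel u (bt N)) a" for N
  proof -
    have "h2_inner (hankel u a) (bt N) = (\<Sum>n<N. hankel u a n * cnj (b n))" by (rule A1)
    also have "\<dots> = (\<Sum>n<N. \<Sum>k. u (n+k) * cnj (a k) * cnj (b n))"
      unfolding hankel_def
      by (rule sum.cong[OF refl], rule suminf_mult2, rule hankel_summable[OF uH a])
    also have "\<dots> = (\<Sum>k. \<Sum>n<N. u (n+k) * cnj (a k) * cnj (b n))"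
      by (rule suminf_sum[symmetric], rule summable_mult2, rule hankel_summable[OF uH a])
    also have "\<dots> = (\<Sum>k. hankel u (bt N) k * cnj (a k))"
    proof (rule suminf_cong)
      fix k
      have "hankel u (bt N) k = (\<Sum>n<N. u (k + n) * cnj (b n))"
        unfolding hankel_def by (subst suminf_finite[of "{..<N}"]) (auto simp: bt_def)
      thus "(\<Sum>n<N. u (n+k) * cnj (a k) * cnj (b n)) = hankel u (bt N) k * cnj (a k)"
        by (simp add: sum_distrib_left sum_distrib_right mult_ac add.commute)
    qed
    finally show ?thesis unfolding h2_inner_def .
  qed
  have L1: "(\<lambda>N. h2_inner (hankel u a) (bt N)) \<longlonglongrightarrow> h2_inner (hankel u a) b"
    unfolding A1 unfolding h2_inner_def by (rule summable_LIMSEQ, rule H2_prod[OF ha b])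
  have L2: "(\<lambda>N. h2_inner (hankel u (bt N)) a) \<longlonglongrightarrow> h2_inner (hankel u b) a"
  proof -
    define d where "d N = h2_inner (hankel u b) a - h2_inner (hankel u (bt N)) a" for N
    define t where "t N = nrm b - (\<Sum>i<N. (cmod (b i))\<^sup>2)" for N
    have t0: "t \<longlonglongrightarrow> 0"
    proof -
      have "t \<longlonglongrightarrow> nrm b - nrm b" unfolding t_def
        by (intro tendsto_diff tendsto_const) (unfold nrm_def, rule summable_LIMSEQ, rule H2_D[OF b])
      thus ?thesis by simp
    qed
    have bd: "b - bt N \<in> H2" for N
      using H2_diff[OF b btH[of N]] by (simp add: fun_diff_def)
    have nbd: "nrm (\<lambda>n. b n - bt N n) = t N" for N
    proof -
      have "nrm b = (\<Sum>n. (cmod (b (n + N)))\<^sup>2) + (\<Sum>i<N. (cmod (b i))\<^sup>2)"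
        unfolding nrm_def by (rule suminf_split_initial_segment, rule H2_D[OF b])
      moreover have "nrm (\<lambda>n. b n - bt N n) = (\<Sum>n. (cmod (b (n + N) - bt N (n + N)))\<^sup>2) + (\<Sum>i<N. (cmod (b i - bt N i))\<^sup>2)"
        unfolding nrm_def by (rule suminf_split_initial_segment, rule H2_D, rule H2_diff[OF b btH])
      moreover have "(\<Sum>i<N. (cmod (b i - bt N i))\<^sup>2) = 0" by (simp add: bt_def)
      moreover have "(\<lambda>n. (cmod (b (n + N) - bt N (n + N)))\<^sup>2) = (\<lambda>n. (cmod (b (n + N)))\<^sup>2)"
        by (simp add: bt_def)
      ultimately show ?thesis unfolding t_def by (simp add: bt_def)
    qed
    have dN: "d N = h2_inner (hankel u (\<lambda>n. b n - bt N n)) a" for N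
      unfolding d_def hankel_diff[OF uH b btH]
      by (rule inner_diff_left[symmetric]) (use BMOA_hankel_H2[OF u] b btH a in auto)
    have bnd: "norm (d N) \<le> sqrt (C * t N * nrm a)" for N
    proof -
      have "(cmod (d N))\<^sup>2 \<le> nrm (hankel u (\<lambda>n. b n - bt N n)) * nrm a"
        unfolding dN by (rule CS_H2[OF BMOA_hankel_H2[OF u H2_diff[OF b btH]] a])
      also have "\<dots> \<le> C * t N * nrm a"
        using C H2_diff[OF b btH[of N]] nrm_nonneg[OF a] nbd[of N]
        by (metis mult_right_mono)
      finally show ?thesis by (simp add: real_le_rsqrt)
    qed
    have "(\<lambda>N. sqrt (C * t N * nrm a)) \<longlonglongrightarrow> sqrt (C * 0 * nrm a)"
      by (intro tendsto_real_sqrt tendsto_mult tendsto_const t0)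
    hence g0: "(\<lambda>N. sqrt (C * t N * nrm a)) \<longlonglongrightarrow> 0" by simp
    have ev: "eventually (\<lambda>N. norm (d N) \<le> sqrt (C * t N * nrm a)) sequentially"
      using bnd by (intro always_eventually) blast
    have "d \<longlonglongrightarrow> 0" by (rule Lim_null_comparison[OF ev g0])
    then have "(\<lambda>N. h2_inner (hankel u b) a - d N) \<longlonglongrightarrow> h2_inner (hankel u b) a - 0"
      by (intro tendsto_diff tendsto_const)
    thus ?thesis by (simp add: d_def)
  qed
  show ?thesis using LIMSEQ_unique[OF L1] L2 fin by simp
qed


lemma cnj_hankel0:
  assumes uH: "u \<in> H2" and f: "f \<in> H2"
  shows "cnj (hankel u f 0) = h2_inner f u"
    unfolding hankel_def h2_inner_def
    by (subst suminf_cnj[OF hankel_summable[OF uH f, of 0]]) (simp add: mult.commute)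

lemma H_sq_identity:
  assumes u: "u \<in> BMOA" and f: "f \<in> H2"
  shows "hankel u (hankel u f) n = h2_inner f u * u n + shifted_hankel u (shifted_hankel u f) n"
proof -
  have uH: "u \<in> H2" using BMOA_H2[OF u] .
  have hf: "hankel u f \<in> H2" using BMOA_hankel_H2[OF u f] .
  define g where "g k = u (n + k) * cnj (hankel u f k)" for k
  have sg: "summable g" unfolding g_def by (rule hankel_summable[OF uH hf])
  have "shifted_hankel u (shifted_hankel u f) n = (\<Sum>k. g (Suc k))"
    unfolding shifted_hankel_eq[of u "shifted_hankel u f"] unfolding shifted_hankel_eq g_def
    unfolding hankel_def[of u "\<lambda>m. hankel u f (Suc m)"] by simp
  also have "\<dots> = suminf g - g 0" by (rule suminf_split_head[OF sg])
  also have "g 0 = u n * cnj (hankel u f 0)" by (simp add: g_def)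
  also have "cnj (hankel u f 0) = h2_inner f u"
    unfolding hankel_def h2_inner_def
    by (subst suminf_cnj[OF hankel_summable[OF uH f, of 0]]) (simp add: mult.commute)
  finally show ?thesis unfolding g_def hankel_def[of u "hankel u f"] by simp
qed

lemma E_K_alt: "E_K u s = E_H (shift_adj u) s"
  unfolding E_K_def E_H_def shifted_hankel_def ..

lemma EH_hankel:
  assumes v: "v \<in> BMOA" and f: "f \<in> E_H v s"
  shows "hankel v f \<in> E_H v s"
proof -
  have vH: "v \<in> H2" using BMOA_H2[OF v] .
  have fH: "f \<in> H2" and e: "hankel v (hankel v f) = (\<lambda>n. complex_of_real (s\<^sup>2) * f n)"
    using f unfolding E_H_def by auto
  have "hankel v (hankel v (hankel v f)) = hankel v (\<lambda>n. complex_of_real (s\<^sup>2) * f n)"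
    by (simp add: e)
  also have "\<dots> = (\<lambda>n. complex_of_real (s\<^sup>2) * hankel v f n)"
    by (simp add: hankel_scale[OF vH fH])
  finally show ?thesis unfolding E_H_def using BMOA_hankel_H2[OF v fH] by simp
qed

lemma EH_scale:
  assumes v: "v \<in> BMOA" and f: "f \<in> E_H v s"
  shows "(\<lambda>n. c * f n) \<in> E_H v s"
proof -
  have vH: "v \<in> H2" using BMOA_H2[OF v] .
  have fH: "f \<in> H2" and e: "hankel v (hankel v f) = (\<lambda>n. complex_of_real (s\<^sup>2) * f n)"
    using f unfolding E_H_def by auto
  have "hankel v (hankel v (\<lambda>n. c * f n)) = (\<lambda>n. c * hankel v (hankel v f) n)"
    by (simp add: hankel_scale[OF vH fH] hankel_scale[OF vH BMOA_hankel_H2[OF v fH]])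
  also have "\<dots> = (\<lambda>n. complex_of_real (s\<^sup>2) * (c * f n))" by (simp add: e mult_ac)
  finally show ?thesis unfolding E_H_def using H2_scale[OF fH] by simp
qed

lemma EH_orth:
  assumes u: "u \<in> BMOA" and f: "f \<in> E_H u s" and o: "h2_inner f u = 0"
  shows "f \<in> E_K u s"
proof -
  have fH: "f \<in> H2" and e: "hankel u (hankel u f) = (\<lambda>n. complex_of_real (s\<^sup>2) * f n)"
    using f unfolding E_H_def by auto
  have "shifted_hankel u (shifted_hankel u f) n = complex_of_real (s\<^sup>2) * f n" for n
    using H_sq_identity[OF u fH, of n] o e by (metis add_0 mult_zero_left)
  thus ?thesis unfolding E_K_def using fH by auto
qed

lemma EK_orth:
  assumes u: "u \<in> BMOA" and f: "f \<in> E_K u s" and o: "h2_inner f u = 0"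
  shows "f \<in> E_H u s"
proof -
  have fH: "f \<in> H2" and e: "shifted_hankel u (shifted_hankel u f) = (\<lambda>n. complex_of_real (s\<^sup>2) * f n)"
    using f unfolding E_K_def by auto
  have "hankel u (hankel u f) n = complex_of_real (s\<^sup>2) * f n" for n
    using H_sq_identity[OF u fH, of n] o e by simp
  thus ?thesis unfolding E_H_def using fH by auto
qed

lemma not_both:
  assumes u: "u \<in> BMOA" and f: "f \<in> E_H u s" and g: "g \<in> E_K u s"
  shows "h2_inner f u = 0 \<or> h2_inner g u = 0"
proof -
  define v where "v = shift_adj u"
  have v: "v \<in> BMOA" unfolding v_def by (rule shift_BMOA[OF u])
  have uH: "u \<in> H2" using BMOA_H2[OF u] .
  have fH: "f \<in> H2" and ef: "hankel u (hankel u f) = (\<lambda>n. complex_of_real (s\<^sup>2) * f n)"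
    using f unfolding E_H_def by auto
  have gH: "g \<in> H2" and eg: "hankel v (hankel v g) = (\<lambda>n. complex_of_real (s\<^sup>2) * g n)"
    using g unfolding E_K_def shifted_hankel_def v_def by auto
  have hvf: "hankel v f \<in> H2" using BMOA_hankel_H2[OF v fH] .
  have hvg: "hankel v g \<in> H2" using BMOA_hankel_H2[OF v gH] .
  have sc: "(\<lambda>n. complex_of_real (s\<^sup>2) * f n) \<in> H2" using H2_scale[OF fH] .
  have sc2: "(\<lambda>n. h2_inner f u * u n) \<in> H2" using H2_scale[OF uH] .
  have kf: "hankel v (hankel v f) = (\<lambda>n. complex_of_real (s\<^sup>2) * f n - h2_inner f u * u n)"
  proof
    fix n show "hankel v (hankel v f) n = complex_of_real (s\<^sup>2) * f n - h2_inner f u * u n"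
      using H_sq_identity[OF u fH, of n] fun_cong[OF ef, of n] unfolding shifted_hankel_def v_def
      by (simp add: algebra_simps)
  qed
  have X1: "h2_inner (hankel v (hankel v f)) g = complex_of_real (s\<^sup>2) * h2_inner f g - h2_inner f u * h2_inner u g"
    unfolding kf inner_diff_left[OF sc sc2 gH] inner_scale_left[OF fH gH] inner_scale_left[OF uH gH] ..
  have "h2_inner (hankel v (hankel v g)) f = h2_inner (hankel v f) (hankel v g)"
    by (rule hankel_sym[OF v hvg fH])
  moreover have "h2_inner (hankel v (hankel v g)) f = complex_of_real (s\<^sup>2) * h2_inner g f"
    unfolding eg by (rule inner_scale_left[OF gH fH])
  ultimately have Y: "h2_inner (hankel v f) (hankel v g) = complex_of_real (s\<^sup>2) * h2_inner g f" by simp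
  have "h2_inner (hankel v (hankel v f)) g = h2_inner (hankel v g) (hankel v f)"
    by (rule hankel_sym[OF v hvf gH])
  also have "\<dots> = cnj (h2_inner (hankel v f) (hankel v g))" by (rule inner_cnj[OF hvf hvg, symmetric])
  also have "\<dots> = complex_of_real (s\<^sup>2) * h2_inner f g"
    unfolding Y using inner_cnj[OF gH fH] by simp
  finally have "h2_inner f u * h2_inner u g = 0" unfolding X1 by simp
  moreover have "h2_inner u g = cnj (h2_inner g u)" using inner_cnj[OF gH uH] by simp
  ultimately show ?thesis by auto
qed

lemma both_orth:
  assumes u: "u \<in> BMOA" and s: "s > 0"
    and oH: "orth_to u (E_H u s)" and oK: "orth_to u (E_K u s)"
  shows "\<forall>g \<in> E_H u s. g m = 0"
proof (induction m)
  have uH: "u \<in> H2" using BMOA_H2[OF u] .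
  case 0
  show ?case
  proof
    fix g assume g: "g \<in> E_H u s"
    have gH: "g \<in> H2" and e: "hankel u (hankel u g) = (\<lambda>n. complex_of_real (s\<^sup>2) * g n)"
      using g unfolding E_H_def by auto
    have h: "hankel u g \<in> E_H u s" by (rule EH_hankel[OF u g])
    have hH: "hankel u g \<in> H2" using BMOA_hankel_H2[OF u gH] .
    have "h2_inner (hankel u g) u = 0" using oH h unfolding orth_to_def by blast
    hence "cnj (hankel u (hankel u g) 0) = 0"
      using cnj_hankel0[OF uH hH] by simp
    hence "complex_of_real (s\<^sup>2) * g 0 = 0" using fun_cong[OF e, of 0] by simp
    thus "g 0 = 0" using s by simp
  qed
next
  have uH: "u \<in> H2" using BMOA_H2[OF u] .
  case (Suc m)
  show ?case
  proof
    fix g assume g: "g \<in> E_H u s"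
    have gH: "g \<in> H2" and e: "hankel u (hankel u g) = (\<lambda>n. complex_of_real (s\<^sup>2) * g n)"
      using g unfolding E_H_def by auto
    define g' where "g' = (\<lambda>n. complex_of_real (1 / s\<^sup>2) * hankel u g n)"
    have g'E: "g' \<in> E_H u s" unfolding g'_def by (rule EH_scale[OF u EH_hankel[OF u g]])
    have hg': "hankel u g' = g"
      unfolding g'_def hankel_scale[OF uH BMOA_hankel_H2[OF u gH]] e using s by auto
    have "h2_inner g' u = 0" using oH g'E unfolding orth_to_def by blast
    hence g'K: "g' \<in> E_K u s" by (rule EH_orth[OF u g'E])
    have "shifted_hankel u g' \<in> E_K u s"
      using EH_hankel[OF shift_BMOA[OF u], of g' s] g'K unfolding E_K_alt shifted_hankel_def by simp
    moreover have "h2_inner (shifted_hankel u g') u = 0" using oK calculation unfolding orth_to_def by blast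
    ultimately have "shifted_hankel u g' \<in> E_H u s" by (rule EK_orth[OF u])
    hence "shifted_hankel u g' m = 0" using Suc.IH by blast
    thus "g (Suc m) = 0" unfolding shifted_hankel_eq hg' .
  qed
qed


theorem mainTheorem4:
  fixes u :: "nat \<Rightarrow> complex" and s :: real
  assumes "u \<in> BMOA" and "s > 0"
    and "{(\<lambda>n. f n + g n) | f g. f \<in> E_H u s \<and> g \<in> E_K u s} \<noteq> {(\<lambda>n. 0)}"
  shows "(\<not> orth_to u (E_H u s) \<and> E_K u s = E_H u s \<inter> orth_compl u) \<noteq>
         (\<not> orth_to u (E_K u s) \<and> E_H u s = E_K u s \<inter> orth_compl u)"
proof -
  note u = assms(1)
  have z0: "hankel v (\<lambda>n. 0) = (\<lambda>n. 0)" for v unfolding hankel_def by simp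
  have zH: "(\<lambda>n. 0) \<in> E_H u s" unfolding E_H_def using H2_zero z0 by simp
  have zK: "(\<lambda>n. 0) \<in> E_K u s" unfolding E_K_def shifted_hankel_def using H2_zero z0 by simp
  have ne: "\<exists>f \<in> E_H u s \<union> E_K u s. f \<noteq> (\<lambda>n. 0)"
  proof (rule ccontr)
    assume "\<not> ?thesis"
    hence a: "\<forall>f \<in> E_H u s \<union> E_K u s. f = (\<lambda>n. 0)" by blast
    have "{(\<lambda>n. f n + g n) | f g. f \<in> E_H u s \<and> g \<in> E_K u s} = {(\<lambda>n. 0)}"
    proof
      show "{(\<lambda>n. f n + g n) | f g. f \<in> E_H u s \<and> g \<in> E_K u s} \<subseteq> {(\<lambda>n. 0)}"
      proof
        fix x assume "x \<in> {(\<lambda>n. f n + g n) | f g. f \<in> E_H u s \<and> g \<in> E_K u s}"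
        then obtain f g where x: "x = (\<lambda>n. f n + g n)" and f: "f \<in> E_H u s" and g: "g \<in> E_K u s"
          by blast
        have "f = (\<lambda>n. 0)" "g = (\<lambda>n. 0)" using a f g by auto
        thus "x \<in> {(\<lambda>n. 0)}" using x by simp
      qed
      show "{(\<lambda>n. 0)} \<subseteq> {(\<lambda>n. f n + g n) | f g. f \<in> E_H u s \<and> g \<in> E_K u s}"
        using zH zK by force
    qed
    thus False using assms(3) by blast
  qed
  have HH: "E_H u s \<subseteq> H2" unfolding E_H_def by auto
  have KH: "E_K u s \<subseteq> H2" unfolding E_K_def by auto
  have oc: "orth_to u E \<longleftrightarrow> E \<subseteq> orth_compl u" if "E \<subseteq> H2" for E
    using that unfolding orth_to_def orth_compl_def by auto
  have s1: "E_H u s \<inter> orth_compl u \<subseteq> E_K u s"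
    using EH_orth[OF u] unfolding orth_compl_def by auto
  have s2: "E_K u s \<inter> orth_compl u \<subseteq> E_H u s"
    using EK_orth[OF u] unfolding orth_compl_def by auto
  have nb: "orth_to u (E_H u s) \<or> orth_to u (E_K u s)"
    using not_both[OF u] unfolding orth_to_def by blast
  have nboth: "\<not> (orth_to u (E_H u s) \<and> orth_to u (E_K u s))"
  proof
    assume o: "orth_to u (E_H u s) \<and> orth_to u (E_K u s)"
    have zH': "\<forall>g \<in> E_H u s. g = (\<lambda>n. 0)"
      using both_orth[OF u assms(2)] o by blast
    have "E_K u s \<subseteq> E_H u s" using o s2 oc[OF KH] by blast
    thus False using ne zH' by blast
  qed
  show ?thesis
  proof (cases "orth_to u (E_H u s)")
    case True
    hence nK: "\<not> orth_to u (E_K u s)" using nboth by blast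
    have "E_H u s \<subseteq> orth_compl u" using True oc[OF HH] by blast
    hence "E_H u s = E_K u s \<inter> orth_compl u" using s1 s2 by blast
    thus ?thesis using True nK by blast
  next
    case False
    hence oK: "orth_to u (E_K u s)" using nb by blast
    have "E_K u s \<subseteq> orth_compl u" using oK oc[OF KH] by blast
    hence "E_K u s = E_H u s \<inter> orth_compl u" using s1 s2 by blast
    thus ?thesis using False oK by blast
  qed
qed

end
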